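(* Let $G$ be a finite nilpotent group having at least two distinct non-abelian Sylow subgroups (for two distinct primes). Let $H$ be a non-abelian group such that $|Z(G)|\geq |Z(H)|$ and $\Gamma_G\cong\Gamma_H$. Then $|G|=|H|$.
   Context: For a non-abelian group $G$ with center $Z(G)$, the non-commuting graph $\Gamma_G$ is the simple graph with vertex set $G\setminus Z(G)$ in which two distinct vertices $x,y$ are adjacent if and only if $xy\neq yx$. *)

theory Defs
  imports "HOL-Algebra.Algebra" "HOL-Computational_Algebra.Primes"
begin

definition center :: "('a, 'b) monoid_scheme \<Rightarrow> 'a set" where
  "center G = {z \<in> carrier G. \<forall>x \<in> carrier G. z \<otimes>\<^bsub>G\<^esub> x = x \<otimes>\<^bsub>G\<^esub> z}"

text \<open>Upper central series: Z_0 = 1, Z_(i+1) = elements whose commutators with all of G lie in Z_i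
  (i.e. Z_(i+1)/Z_i = Z(G/Z_i)).\<close>
fun upper_central :: "('a, 'b) monoid_scheme \<Rightarrow> nat \<Rightarrow> 'a set" where
  "upper_central G 0 = {\<one>\<^bsub>G\<^esub>}"
| "upper_central G (Suc n) = {x \<in> carrier G. \<forall>y \<in> carrier G.
     x \<otimes>\<^bsub>G\<^esub> y \<otimes>\<^bsub>G\<^esub> inv\<^bsub>G\<^esub> x \<otimes>\<^bsub>G\<^esub> inv\<^bsub>G\<^esub> y \<in> upper_central G n}"

definition nilpotent_group :: "('a, 'b) monoid_scheme \<Rightarrow> bool" where
  "nilpotent_group G \<longleftrightarrow> group G \<and> (\<exists>n. upper_central G n = carrier G)"

definition non_abelian_set :: "('a, 'b) monoid_scheme \<Rightarrow> 'a set \<Rightarrow> bool" where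
  "non_abelian_set G S \<longleftrightarrow> (\<exists>x \<in> S. \<exists>y \<in> S. x \<otimes>\<^bsub>G\<^esub> y \<noteq> y \<otimes>\<^bsub>G\<^esub> x)"

abbreviation non_abelian :: "('a, 'b) monoid_scheme \<Rightarrow> bool" where
  "non_abelian G \<equiv> non_abelian_set G (carrier G)"

definition sylow_subgroup :: "('a, 'b) monoid_scheme \<Rightarrow> nat \<Rightarrow> 'a set \<Rightarrow> bool" where
  "sylow_subgroup G p P \<longleftrightarrow> Factorial_Ring.prime p \<and> subgroup P G \<and>
     card P = p ^ multiplicity p (order G)"

definition nc_adj :: "('a, 'b) monoid_scheme \<Rightarrow> 'a \<Rightarrow> 'a \<Rightarrow> bool" where
  "nc_adj G x y \<longleftrightarrow> x \<in> carrier G - center G \<and> y \<in> carrier G - center G \<and> x \<noteq> y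
     \<and> x \<otimes>\<^bsub>G\<^esub> y \<noteq> y \<otimes>\<^bsub>G\<^esub> x"

definition nc_graph_iso :: "('a, 'b) monoid_scheme \<Rightarrow> ('c, 'd) monoid_scheme \<Rightarrow> bool" where
  "nc_graph_iso G H \<longleftrightarrow> (\<exists>f. bij_betw f (carrier G - center G) (carrier H - center H) \<and>
     (\<forall>x \<in> carrier G - center G. \<forall>y \<in> carrier G - center G.
        nc_adj G x y \<longleftrightarrow> nc_adj H (f x) (f y)))"

end

theory Submission
  imports Defs
begin



lemma (in group) cancel_l: "a \<in> carrier G \<Longrightarrow> z \<in> carrier G \<Longrightarrow> a \<otimes> (inv a \<otimes> z) = z"
  by (simp add: m_assoc[symmetric])
lemma (in group) cancel_l2: "a \<in> carrier G \<Longrightarrow> z \<in> carrier G \<Longrightarrow> inv a \<otimes> (a \<otimes> z) = z"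
  by (simp add: m_assoc[symmetric])

definition cen :: "('a, 'b) monoid_scheme \<Rightarrow> 'a \<Rightarrow> 'a set" where
  "cen G x = {h \<in> carrier G. h \<otimes>\<^bsub>G\<^esub> x = x \<otimes>\<^bsub>G\<^esub> h}"

lemma (in group) cen_subgroup: assumes "x \<in> carrier G" shows "subgroup (cen G x) G"
proof (rule subgroupI)
  show "cen G x \<subseteq> carrier G" by (auto simp: cen_def)
  show "cen G x \<noteq> {}" using assms by (auto simp: cen_def intro!: exI[of _ \<one>])
next
  fix a assume a: "a \<in> cen G x"
  then have ac: "a \<in> carrier G" and e: "a \<otimes> x = x \<otimes> a" by (auto simp: cen_def)
  have "inv a \<otimes> x = inv a \<otimes> (x \<otimes> a) \<otimes> inv a" using ac assms by (simp add: m_assoc)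
  also have "\<dots> = x \<otimes> inv a" using ac assms by (simp add: e[symmetric] m_assoc[symmetric])
  finally show "inv a \<in> cen G x" using ac by (simp add: cen_def)
next
  fix a b assume "a \<in> cen G x" "b \<in> cen G x"
  then show "a \<otimes> b \<in> cen G x" using assms by (auto simp: cen_def m_assoc) (metis m_assoc)
qed

lemma (in group) center_sub_cen: "x \<in> carrier G \<Longrightarrow> center G \<subseteq> cen G x"
  by (auto simp: center_def cen_def)

lemma (in group) upper_central_normal: "upper_central G i \<lhd> G"
proof (induction i)
  case 0 then show ?case by (simp add: one_is_normal)
next
  case (Suc i)
  let ?N = "upper_central G i"
  interpret N: normal ?N G by (rule Suc)
  have Nc: "?N \<subseteq> carrier G" by (rule N.subset)
  let ?S = "upper_central G (Suc i)"
  have S: "?S = {x \<in> carrier G. \<forall>y \<in> carrier G. x \<otimes> y \<otimes> inv x \<otimes> inv y \<in> ?N}" by simp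
  have conj: "g \<otimes> h \<otimes> inv g \<in> ?N" if "g \<in> carrier G" "h \<in> ?N" for g h
    using that N.inv_op_closed2 by blast
  have sub: "subgroup ?S G"
  proof (rule subgroupI)
    show "?S \<subseteq> carrier G" by auto
    show "?S \<noteq> {}" by (auto intro!: exI[of _ \<one>] N.one_closed)
  next
    fix a assume a: "a \<in> ?S"
    then have ac: "a \<in> carrier G" by auto
    show "inv a \<in> ?S"
    proof -
      { fix y assume y: "y \<in> carrier G"
        have c: "a \<otimes> y \<otimes> inv a \<otimes> inv y \<in> ?N" using a y by auto
        have "inv a \<otimes> inv (a \<otimes> y \<otimes> inv a \<otimes> inv y) \<otimes> inv (inv a) \<in> ?N"
          using conj[OF inv_closed[OF ac] N.m_inv_closed[OF c]] by simp
        moreover have "inv a \<otimes> inv (a \<otimes> y \<otimes> inv a \<otimes> inv y) \<otimes> inv (inv a) = inv a \<otimes> y \<otimes> inv (inv a) \<otimes> inv y"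
          using ac y by (simp add: inv_mult_group m_assoc cancel_l cancel_l2)
        ultimately have "inv a \<otimes> y \<otimes> inv (inv a) \<otimes> inv y \<in> ?N" by simp }
      then show ?thesis using ac by auto
    qed
  next
    fix a b assume a: "a \<in> ?S" and b: "b \<in> ?S"
    then have ac: "a \<in> carrier G" and bc: "b \<in> carrier G" by auto
    { fix y assume y: "y \<in> carrier G"
      have c1: "a \<otimes> (b \<otimes> y \<otimes> inv b \<otimes> inv y) \<otimes> inv a \<in> ?N" using conj b y ac by auto
      have c2: "a \<otimes> y \<otimes> inv a \<otimes> inv y \<in> ?N" using a y by auto
      have "a \<otimes> (b \<otimes> y \<otimes> inv b \<otimes> inv y) \<otimes> inv a \<otimes> (a \<otimes> y \<otimes> inv a \<otimes> inv y) \<in> ?N"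
        using c1 c2 N.m_closed by blast
      moreover have "a \<otimes> (b \<otimes> y \<otimes> inv b \<otimes> inv y) \<otimes> inv a \<otimes> (a \<otimes> y \<otimes> inv a \<otimes> inv y)
          = a \<otimes> b \<otimes> y \<otimes> inv (a \<otimes> b) \<otimes> inv y"
        using ac bc y by (simp add: inv_mult_group m_assoc cancel_l cancel_l2)
      ultimately have "a \<otimes> b \<otimes> y \<otimes> inv (a \<otimes> b) \<otimes> inv y \<in> ?N" by simp }
    then show "a \<otimes> b \<in> ?S" using ac bc by auto
  qed
  show ?case
  proof (subst normal_inv_iff, intro conjI sub ballI)
    fix g a assume g: "g \<in> carrier G" and a: "a \<in> ?S"
    then have ac: "a \<in> carrier G" by auto
    { fix y assume y: "y \<in> carrier G"
      have c: "a \<otimes> (inv g \<otimes> y \<otimes> g) \<otimes> inv a \<otimes> inv (inv g \<otimes> y \<otimes> g) \<in> ?N" using a y g by auto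
      have "g \<otimes> (a \<otimes> (inv g \<otimes> y \<otimes> g) \<otimes> inv a \<otimes> inv (inv g \<otimes> y \<otimes> g)) \<otimes> inv g \<in> ?N"
        using conj c g by simp
      moreover have "g \<otimes> (a \<otimes> (inv g \<otimes> y \<otimes> g) \<otimes> inv a \<otimes> inv (inv g \<otimes> y \<otimes> g)) \<otimes> inv g
         = g \<otimes> a \<otimes> inv g \<otimes> y \<otimes> inv (g \<otimes> a \<otimes> inv g) \<otimes> inv y"
        using ac g y by (simp add: inv_mult_group m_assoc cancel_l cancel_l2)
      ultimately have "g \<otimes> a \<otimes> inv g \<otimes> y \<otimes> inv (g \<otimes> a \<otimes> inv g) \<otimes> inv y \<in> ?N" by simp }
    then show "g \<otimes> a \<otimes> inv g \<in> ?S" using ac g by auto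
  qed
qed





declare mult_FactGroup[simp del] one_FactGroup[simp del]

lemma (in group) comm_from_comm:
  assumes a: "a \<in> carrier G" and b: "b \<in> carrier G" and e: "a \<otimes> b \<otimes> inv a \<otimes> inv b = \<one>"
  shows "a \<otimes> b = b \<otimes> a"
proof -
  have "a \<otimes> b \<otimes> inv a \<otimes> inv b \<otimes> (b \<otimes> a) = a \<otimes> b" using a b by (simp add: m_assoc cancel_l2)
  then show ?thesis using e a b by simp
qed

lemma (in group) inv_central:
  assumes W: "W \<in> carrier G" and cen: "\<And>g. g \<in> carrier G \<Longrightarrow> W \<otimes> g = g \<otimes> W"
    and g: "g \<in> carrier G"
  shows "inv W \<otimes> g = g \<otimes> inv W"
proof -
  have "inv W \<otimes> g = inv W \<otimes> (g \<otimes> W) \<otimes> inv W" using W g by (simp add: m_assoc)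
  also have "\<dots> = g \<otimes> inv W" using W g by (simp add: cen[OF g, symmetric] m_assoc[symmetric])
  finally show ?thesis .
qed

lemma (in group) comm_pow_lemma:
  assumes U: "U \<in> carrier G" and V: "V \<in> carrier G" and W: "W \<in> carrier G"
    and cen: "\<And>g. g \<in> carrier G \<Longrightarrow> W \<otimes> g = g \<otimes> W"
    and e: "U \<otimes> V \<otimes> inv U = W \<otimes> V"
  shows "U [^] (k::nat) \<otimes> V \<otimes> inv (U [^] k) = W [^] k \<otimes> V"
proof (induction k)
  case 0 then show ?case using V by simp
next
  case (Suc k)
  have "U [^] Suc k \<otimes> V \<otimes> inv (U [^] Suc k) = U [^] k \<otimes> (U \<otimes> V \<otimes> inv U) \<otimes> inv (U [^] k)"
    using U V by (simp add: inv_mult_group m_assoc)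
  also have "\<dots> = U [^] k \<otimes> (W \<otimes> V) \<otimes> inv (U [^] k)" by (simp add: e)
  also have "\<dots> = W \<otimes> (U [^] k \<otimes> V \<otimes> inv (U [^] k))"
    using U V W cen[of "U [^] k"] by (simp add: m_assoc[symmetric])
  also have "\<dots> = W \<otimes> (W [^] k \<otimes> V)" by (simp add: Suc)
  also have "\<dots> = W [^] Suc k \<otimes> V" using W V cen[of "W [^] k"] by (simp add: m_assoc[symmetric])
  finally show ?case .
qed

lemma (in group) comm_pow_one:
  assumes U: "U \<in> carrier G" and V: "V \<in> carrier G" and W: "W \<in> carrier G"
    and cen: "\<And>g. g \<in> carrier G \<Longrightarrow> W \<otimes> g = g \<otimes> W"
    and e: "U \<otimes> V \<otimes> inv U = W \<otimes> V" and xm: "U [^] (m::nat) = \<one>"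
  shows "W [^] m = \<one>"
proof -
  have "W [^] m \<otimes> V = V"
    using comm_pow_lemma[OF U V W cen e, of m] xm V by simp
  then show ?thesis using W V by simp
qed

lemma (in group) coprime_pow_one:
  assumes W: "W \<in> carrier G" and "W [^] (m::nat) = \<one>" "W [^] (n::nat) = \<one>" "coprime m n"
  shows "W = \<one>"
proof (cases "m = 0")
  case True
  then have "n = 1" using assms(4) by simp
  then show ?thesis using assms(3) W by simp
next
  case False
  obtain s t where st: "m * s = n * t + gcd m n" using bezout_nat[OF False] by blast
  then have st1: "m * s = n * t + 1" using assms(4) by simp
  have "W [^] (m * s) = \<one>" using assms(2) W by (simp add: nat_pow_pow[symmetric])
  moreover have "W [^] (n * t + 1) = W" using assms(3) W
    by (simp add: nat_pow_mult[symmetric] nat_pow_pow[symmetric])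
  ultimately show ?thesis using st1 by simp
qed

lemma (in group) nilpotent_coprime_commute:
  assumes nil: "upper_central G N = carrier G"
    and x: "x \<in> carrier G" and y: "y \<in> carrier G"
    and xm: "x [^] (m::nat) = \<one>" and yn: "y [^] (n::nat) = \<one>" and cop: "coprime m n"
  shows "x \<otimes> y = y \<otimes> x"
proof -
  let ?c = "x \<otimes> y \<otimes> inv x \<otimes> inv y"
  have cc: "?c \<in> carrier G" using x y by simp
  have step: "?c \<in> upper_central G i" if "?c \<in> upper_central G (Suc i)" for i
  proof -
    let ?N = "upper_central G i"
    interpret N: normal ?N G by (rule upper_central_normal)
    interpret Q: group "G Mod ?N" by (rule N.factorgroup_is_group)
    let ?p = "\<lambda>a. ?N #> a"
    interpret h: group_hom G "G Mod ?N" ?p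
      by (unfold_locales) (rule N.r_coset_hom_Mod)
    have cen: "\<And>g. g \<in> carrier (G Mod ?N) \<Longrightarrow> ?p ?c \<otimes>\<^bsub>G Mod ?N\<^esub> g = g \<otimes>\<^bsub>G Mod ?N\<^esub> ?p ?c"
    proof -
      fix g assume "g \<in> carrier (G Mod ?N)"
      then obtain a where a: "a \<in> carrier G" and ga: "g = ?p a"
        by (auto simp: carrier_FactGroup)
      have in1: "?c \<otimes> a \<otimes> inv ?c \<otimes> inv a \<in> ?N" using that a by auto
      have "?p (?c \<otimes> a \<otimes> inv ?c \<otimes> inv a) = \<one>\<^bsub>G Mod ?N\<^esub>"
        using in1 N.rcos_const by (simp add: one_FactGroup)
      then have "?p ?c \<otimes>\<^bsub>G Mod ?N\<^esub> ?p a \<otimes>\<^bsub>G Mod ?N\<^esub> inv\<^bsub>G Mod ?N\<^esub> (?p ?c) \<otimes>\<^bsub>G Mod ?N\<^esub> inv\<^bsub>G Mod ?N\<^esub> (?p a) = \<one>\<^bsub>G Mod ?N\<^esub>"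
        using cc a by (simp only: h.hom_mult h.hom_inv m_closed inv_closed)
      then show "?p ?c \<otimes>\<^bsub>G Mod ?N\<^esub> g = g \<otimes>\<^bsub>G Mod ?N\<^esub> ?p ?c"
        unfolding ga by (rule Q.comm_from_comm[OF h.hom_closed[OF cc] h.hom_closed[OF a]])
    qed
    let ?X = "?p x" and ?Y = "?p y" and ?C = "?p ?c"
    have X: "?X \<in> carrier (G Mod ?N)" and Y: "?Y \<in> carrier (G Mod ?N)"
      and C: "?C \<in> carrier (G Mod ?N)" using x y cc by auto
    have e1: "?X \<otimes>\<^bsub>G Mod ?N\<^esub> ?Y \<otimes>\<^bsub>G Mod ?N\<^esub> inv\<^bsub>G Mod ?N\<^esub> ?X = ?C \<otimes>\<^bsub>G Mod ?N\<^esub> ?Y"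
    proof -
      have "x \<otimes> y \<otimes> inv x = ?c \<otimes> y" using x y by (simp add: m_assoc)
      then have "?p (x \<otimes> y \<otimes> inv x) = ?p (?c \<otimes> y)" by (simp only:)
      then show ?thesis using x y cc by (simp only: h.hom_mult h.hom_inv m_closed inv_closed)
    qed
    have e2: "?Y \<otimes>\<^bsub>G Mod ?N\<^esub> ?X \<otimes>\<^bsub>G Mod ?N\<^esub> inv\<^bsub>G Mod ?N\<^esub> ?Y = inv\<^bsub>G Mod ?N\<^esub> ?C \<otimes>\<^bsub>G Mod ?N\<^esub> ?X"
    proof -
      have "y \<otimes> x \<otimes> inv y = inv ?c \<otimes> x" using x y by (simp add: m_assoc inv_mult_group cancel_l cancel_l2)
      then have "?p (y \<otimes> x \<otimes> inv y) = ?p (inv ?c \<otimes> x)" by (simp only:)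
      then show ?thesis using x y cc by (simp only: h.hom_mult h.hom_inv m_closed inv_closed)
    qed
    have cen2: "\<And>g. g \<in> carrier (G Mod ?N) \<Longrightarrow> inv\<^bsub>G Mod ?N\<^esub> ?C \<otimes>\<^bsub>G Mod ?N\<^esub> g = g \<otimes>\<^bsub>G Mod ?N\<^esub> inv\<^bsub>G Mod ?N\<^esub> ?C"
      using cen C Q.inv_central by blast
    have Xm: "?X [^]\<^bsub>G Mod ?N\<^esub> m = \<one>\<^bsub>G Mod ?N\<^esub>" using x xm by (simp only: h.hom_nat_pow[symmetric] h.hom_one)
    have Yn: "?Y [^]\<^bsub>G Mod ?N\<^esub> n = \<one>\<^bsub>G Mod ?N\<^esub>" using y yn by (simp only: h.hom_nat_pow[symmetric] h.hom_one)
    have Cm: "?C [^]\<^bsub>G Mod ?N\<^esub> m = \<one>\<^bsub>G Mod ?N\<^esub>" by (rule Q.comm_pow_one[OF X Y C cen e1 Xm])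
    have "(inv\<^bsub>G Mod ?N\<^esub> ?C) [^]\<^bsub>G Mod ?N\<^esub> n = \<one>\<^bsub>G Mod ?N\<^esub>"
      by (rule Q.comm_pow_one[OF Y X Q.inv_closed[OF C] cen2 e2 Yn])
    then have "inv\<^bsub>G Mod ?N\<^esub> (?C [^]\<^bsub>G Mod ?N\<^esub> n) = \<one>\<^bsub>G Mod ?N\<^esub>" using C
      by (simp add: Q.nat_pow_inv)
    then have Cn: "?C [^]\<^bsub>G Mod ?N\<^esub> n = \<one>\<^bsub>G Mod ?N\<^esub>" using C
      by (metis Q.inv_inv Q.inv_one Q.nat_pow_closed)
    have "?C = \<one>\<^bsub>G Mod ?N\<^esub>" by (rule Q.coprime_pow_one[OF C Cm Cn cop])
    then have "?N #> ?c = ?N" by (simp add: one_FactGroup)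
    then show ?thesis using coset_join1 cc N.subgroup_axioms by blast
  qed
  have "?c \<in> upper_central G (N - k)" for k
  proof (induction k)
    case 0 then show ?case using nil cc by simp
  next
    case (Suc k)
    show ?case
    proof (cases "k < N")
      case True
      then have "N - k = Suc (N - Suc k)" by simp
      then show ?thesis using Suc step by metis
    next
      case False
      then have "N - Suc k = N - k" by simp
      then show ?thesis using Suc by simp
    qed
  qed
  from this[of N] have "?c = \<one>" by simp
  then show ?thesis by (rule comm_from_comm[OF x y])
qed




lemma (in group) prod_formula:
  assumes K1: "subgroup K1 G" and K2: "subgroup K2 G" and fin: "finite (carrier G)"
  shows "card K1 * card K2 = card (K1 \<inter> K2) * card ((\<lambda>(a,b). a \<otimes> b) ` (K1 \<times> K2))"
proof -
  let ?f = "\<lambda>(a,b). a \<otimes> b"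
  interpret A: subgroup K1 G by (rule K1)
  interpret B: subgroup K2 G by (rule K2)
  have f1: "finite K1" using fin A.subset finite_subset by blast
  have f2: "finite K2" using fin B.subset finite_subset by blast
  have finS: "finite (K1 \<times> K2)" using f1 f2 by simp
  have fib: "card {z \<in> K1 \<times> K2. ?f z = y} = card (K1 \<inter> K2)" if "y \<in> ?f ` (K1 \<times> K2)" for y
  proof -
    from that obtain z where z: "z \<in> K1 \<times> K2" "y = ?f z" by blast
    obtain a0 b0 where zz: "z = (a0, b0)" by (cases z)
    have a0: "a0 \<in> K1" and b0: "b0 \<in> K2" and y: "y = a0 \<otimes> b0" using z zz by auto
    have a0c: "a0 \<in> carrier G" and b0c: "b0 \<in> carrier G" using a0 b0 A.subset B.subset by auto
    have eq: "{z \<in> K1 \<times> K2. ?f z = y} = (\<lambda>k. (a0 \<otimes> k, inv k \<otimes> b0)) ` (K1 \<inter> K2)"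
    proof (intro equalityI subsetI)
      fix z assume z: "z \<in> {z \<in> K1 \<times> K2. ?f z = y}"
      then obtain a b where zab: "z = (a,b)" and a: "a \<in> K1" and b: "b \<in> K2" and e: "a \<otimes> b = a0 \<otimes> b0"
        using y by auto
      have ac: "a \<in> carrier G" and bc: "b \<in> carrier G" using a b A.subset B.subset by auto
      let ?k = "inv a0 \<otimes> a"
      have k1: "?k \<in> K1" using a a0 by simp
      have "?k = b0 \<otimes> inv b"
      proof -
        have "inv a0 \<otimes> (a \<otimes> b) \<otimes> inv b = inv a0 \<otimes> (a0 \<otimes> b0) \<otimes> inv b" using e by simp
        then show ?thesis using ac bc a0c b0c by (simp add: m_assoc cancel_l2)
      qed
      then have k2: "?k \<in> K2" using b b0 by simp
      have "a = a0 \<otimes> ?k" using ac a0c by (simp add: cancel_l)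
      moreover have "b = inv ?k \<otimes> b0"
        using \<open>?k = b0 \<otimes> inv b\<close> ac bc a0c b0c by (simp add: inv_mult_group m_assoc)
      ultimately show "z \<in> (\<lambda>k. (a0 \<otimes> k, inv k \<otimes> b0)) ` (K1 \<inter> K2)"
        using zab k1 k2 by blast
    next
      fix z assume "z \<in> (\<lambda>k. (a0 \<otimes> k, inv k \<otimes> b0)) ` (K1 \<inter> K2)"
      then obtain k where k: "k \<in> K1" "k \<in> K2" and z: "z = (a0 \<otimes> k, inv k \<otimes> b0)" by auto
      have kc: "k \<in> carrier G" using k A.subset by auto
      have "(a0 \<otimes> k) \<otimes> (inv k \<otimes> b0) = a0 \<otimes> b0" using kc a0c b0c by (simp add: m_assoc cancel_l)
      then show "z \<in> {z \<in> K1 \<times> K2. ?f z = y}" using z k a0 b0 y by auto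
    qed
    have inj: "inj_on (\<lambda>k. (a0 \<otimes> k, inv k \<otimes> b0)) (K1 \<inter> K2)"
    proof (rule inj_onI)
      fix k k' assume k: "k \<in> K1 \<inter> K2" and k': "k' \<in> K1 \<inter> K2"
        and e: "(a0 \<otimes> k, inv k \<otimes> b0) = (a0 \<otimes> k', inv k' \<otimes> b0)"
      have "a0 \<otimes> k = a0 \<otimes> k'" using e by simp
      moreover have "k \<in> carrier G" "k' \<in> carrier G" using k k' A.subset by auto
      ultimately show "k = k'" using a0c by simp
    qed
    show ?thesis unfolding eq by (rule card_image[OF inj])
  qed
  have "card (K1 \<times> K2) = (\<Sum>z\<in>K1 \<times> K2. 1)" by simp
  also have "\<dots> = (\<Sum>y\<in>?f ` (K1 \<times> K2). (\<Sum>z\<in>{z \<in> K1 \<times> K2. ?f z = y}. 1))"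
    by (rule sum.image_gen[OF finS])
  also have "\<dots> = (\<Sum>y\<in>?f ` (K1 \<times> K2). card (K1 \<inter> K2))"
    using fib by (intro sum.cong) auto
  also have "\<dots> = card (K1 \<inter> K2) * card (?f ` (K1 \<times> K2))" by simp
  finally show ?thesis by (simp add: card_cartesian_product)
qed




lemma (in group) subgroup_pow_card:
  assumes "subgroup P G" "x \<in> P" shows "x [^] card P = \<one>"
proof -
  interpret S: group "G\<lparr>carrier := P\<rparr>" by (rule subgroup.subgroup_is_group[OF assms(1) is_group])
  have "x [^]\<^bsub>G\<lparr>carrier := P\<rparr>\<^esub> order (G\<lparr>carrier := P\<rparr>) = \<one>\<^bsub>G\<lparr>carrier := P\<rparr>\<^esub>"
    by (rule S.pow_order_eq_1) (simp add: assms(2))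
  then show ?thesis by (simp add: order_def nat_pow_consistent[symmetric])
qed

definition comm_set :: "('a, 'b) monoid_scheme \<Rightarrow> 'a set \<Rightarrow> 'a set" where
  "comm_set K S = {v \<in> carrier K - center K. \<forall>s \<in> S. v \<otimes>\<^bsub>K\<^esub> s = s \<otimes>\<^bsub>K\<^esub> v}"

lemma comm_iff_adj:
  assumes "v \<in> carrier K - center K" "s \<in> carrier K - center K"
  shows "(v \<otimes>\<^bsub>K\<^esub> s = s \<otimes>\<^bsub>K\<^esub> v) \<longleftrightarrow> (v = s \<or> \<not> nc_adj K s v)"
  using assms unfolding nc_adj_def by auto

lemma comm_set_image:
  assumes bij: "bij_betw f (carrier G - center G) (carrier H - center H)"
    and adj: "\<forall>x \<in> carrier G - center G. \<forall>y \<in> carrier G - center G.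
        nc_adj G x y \<longleftrightarrow> nc_adj H (f x) (f y)"
    and S: "S \<subseteq> carrier G - center G"
  shows "f ` comm_set G S = comm_set H (f ` S)"
proof -
  have inj: "inj_on f (carrier G - center G)" and img: "f ` (carrier G - center G) = carrier H - center H"
    using bij by (auto simp: bij_betw_def)
  have key: "v \<in> comm_set G S \<longleftrightarrow> f v \<in> comm_set H (f ` S)" if v: "v \<in> carrier G - center G" for v
  proof -
    have fv: "f v \<in> carrier H - center H" using v img by blast
    have "v \<in> comm_set G S \<longleftrightarrow> (\<forall>s \<in> S. v = s \<or> \<not> nc_adj G s v)"
      unfolding comm_set_def using v S comm_iff_adj[OF v] by auto
    also have "\<dots> \<longleftrightarrow> (\<forall>s \<in> S. f v = f s \<or> \<not> nc_adj H (f s) (f v))"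
    proof -
      have "(v = s \<or> \<not> nc_adj G s v) \<longleftrightarrow> (f v = f s \<or> \<not> nc_adj H (f s) (f v))" if s: "s \<in> S" for s
      proof -
        have sv: "s \<in> carrier G - center G" using s S by blast
        have "v = s \<longleftrightarrow> f v = f s" using inj_on_eq_iff[OF inj v sv] by simp
        moreover have "nc_adj G s v \<longleftrightarrow> nc_adj H (f s) (f v)" using adj sv v by blast
        ultimately show ?thesis by simp
      qed
      then show ?thesis by blast
    qed
    also have "\<dots> \<longleftrightarrow> f v \<in> comm_set H (f ` S)"
      unfolding comm_set_def using fv S img comm_iff_adj[OF fv] by auto
    finally show ?thesis .
  qed
  show ?thesis
  proof (intro equalityI subsetI)
    fix w assume "w \<in> f ` comm_set G S"
    then obtain v where v: "v \<in> comm_set G S" "w = f v" by blast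
    then have "v \<in> carrier G - center G" by (simp add: comm_set_def)
    then show "w \<in> comm_set H (f ` S)" using key v by blast
  next
    fix w assume w: "w \<in> comm_set H (f ` S)"
    then have "w \<in> carrier H - center H" by (simp add: comm_set_def)
    then obtain v where v: "v \<in> carrier G - center G" "w = f v" using img by blast
    then show "w \<in> f ` comm_set G S" using key w by blast
  qed
qed

lemma comm_set_card:
  assumes bij: "bij_betw f (carrier G - center G) (carrier H - center H)"
    and adj: "\<forall>x \<in> carrier G - center G. \<forall>y \<in> carrier G - center G.
        nc_adj G x y \<longleftrightarrow> nc_adj H (f x) (f y)"
    and S: "S \<subseteq> carrier G - center G"
  shows "card (comm_set H (f ` S)) = card (comm_set G S)"
proof -
  have inj: "inj_on f (carrier G - center G)" using bij by (auto simp: bij_betw_def)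
  have "comm_set G S \<subseteq> carrier G - center G" by (auto simp: comm_set_def)
  then have "inj_on f (comm_set G S)" using inj inj_on_subset by blast
  then show ?thesis using comm_set_image[OF bij adj S, symmetric] by (simp add: card_image)
qed

lemma (in group) card_split:
  assumes "finite (carrier G)" "T \<subseteq> carrier G" "center G \<subseteq> T"
  shows "card T = card (center G) + card (T - center G)"
proof -
  have "T = center G \<union> (T - center G)" using assms by blast
  moreover have "finite T" using assms finite_subset by blast
  ultimately show ?thesis using assms
    by (metis card_Diff_subset card_mono finite_subset le_add_diff_inverse)
qed

lemma (in group) cen_comm_set1:
  "x \<in> carrier G \<Longrightarrow> cen G x - center G = comm_set G {x}"
  by (auto simp: cen_def comm_set_def)

lemma (in group) cen_comm_set2:
  "x \<in> carrier G \<Longrightarrow> u \<in> carrier G \<Longrightarrow> cen G x \<inter> cen G u - center G = comm_set G {x, u}"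
  by (auto simp: cen_def comm_set_def)

lemma (in group) center_subset: "center G \<subseteq> carrier G"
  by (auto simp: center_def)

lemma (in group) finite_if_noncentral_finite:
  assumes fin: "finite (carrier G - center G)" and h: "h \<in> carrier G - center G"
  shows "finite (carrier G)"
proof -
  have hc: "h \<in> carrier G" using h by simp
  have sub: "(\<lambda>z. h \<otimes> z) ` center G \<subseteq> carrier G - center G"
  proof
    fix w assume "w \<in> (\<lambda>z. h \<otimes> z) ` center G"
    then obtain z where z: "z \<in> center G" and w: "w = h \<otimes> z" by blast
    have zc: "z \<in> carrier G" and zcom: "\<forall>k\<in>carrier G. z \<otimes> k = k \<otimes> z" using z by (auto simp: center_def)
    have "w \<notin> center G"
    proof
      assume "w \<in> center G"
      then have wc: "\<forall>k\<in>carrier G. w \<otimes> k = k \<otimes> w" by (auto simp: center_def)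
      have "\<forall>k\<in>carrier G. h \<otimes> k = k \<otimes> h"
      proof
        fix k assume k: "k \<in> carrier G"
        have "h \<otimes> k \<otimes> z = h \<otimes> z \<otimes> k" using zcom k hc zc by (simp add: m_assoc)
        also have "\<dots> = k \<otimes> (h \<otimes> z)" using wc w k by simp
        also have "\<dots> = k \<otimes> h \<otimes> z" using k hc zc by (simp add: m_assoc)
        finally show "h \<otimes> k = k \<otimes> h" using k hc zc by simp
      qed
      then show False using h hc by (simp add: center_def)
    qed
    then show "w \<in> carrier G - center G" using w hc zc by simp
  qed
  have "inj_on (\<lambda>z. h \<otimes> z) (center G)"
  proof (rule inj_onI)
    fix a b assume "a \<in> center G" "b \<in> center G" "h \<otimes> a = h \<otimes> b"
    moreover then have "a \<in> carrier G" "b \<in> carrier G" using center_subset by auto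
    ultimately show "a = b" using hc by simp
  qed
  then have "finite (center G)" using finite_subset[OF sub fin] finite_imageD by blast
  then have "finite (center G \<union> (carrier G - center G))" using fin by simp
  moreover have "center G \<union> (carrier G - center G) = carrier G" using center_subset by blast
  ultimately show ?thesis by simp
qed




theorem theorem2p4:
  fixes G :: "('a, 'b) monoid_scheme" and H :: "('c, 'd) monoid_scheme"
  assumes "group G" and "finite (carrier G)" and "nilpotent_group G"
    and "\<exists>p q P Q. p \<noteq> q \<and> sylow_subgroup G p P \<and> sylow_subgroup G q Q
                  \<and> non_abelian_set G P \<and> non_abelian_set G Q"
    and "group H" and "non_abelian H"
    and "card (center G) \<ge> card (center H)"
    and "nc_graph_iso G H"
  shows "card (carrier G) = card (carrier H)"
proof -
  interpret G: group G by fact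
  interpret H: group H by fact
  note finG = assms(2)
  obtain N where nil: "upper_central G N = carrier G" using assms(3) by (auto simp: nilpotent_group_def)
  obtain p q P Q where pq: "p \<noteq> q" and sP: "sylow_subgroup G p P" and sQ: "sylow_subgroup G q Q"
    and naP: "non_abelian_set G P" and naQ: "non_abelian_set G Q" using assms(4) by blast
  have pp: "Factorial_Ring.prime p" and subP: "subgroup P G" and cP: "card P = p ^ multiplicity p (order G)"
    using sP by (auto simp: sylow_subgroup_def)
  have qp: "Factorial_Ring.prime q" and subQ: "subgroup Q G" and cQ: "card Q = q ^ multiplicity q (order G)"
    using sQ by (auto simp: sylow_subgroup_def)
  obtain x x2 where xP: "x \<in> P" and x2P: "x2 \<in> P" and xx2: "x \<otimes>\<^bsub>G\<^esub> x2 \<noteq> x2 \<otimes>\<^bsub>G\<^esub> x"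
    using naP by (auto simp: non_abelian_set_def)
  obtain u u2 where uQ: "u \<in> Q" and u2Q: "u2 \<in> Q" and uu2: "u \<otimes>\<^bsub>G\<^esub> u2 \<noteq> u2 \<otimes>\<^bsub>G\<^esub> u"
    using naQ by (auto simp: non_abelian_set_def)
  have xc: "x \<in> carrier G" and x2c: "x2 \<in> carrier G" using xP x2P subP subgroup.subset by blast+
  have uc: "u \<in> carrier G" and u2c: "u2 \<in> carrier G" using uQ u2Q subQ subgroup.subset by blast+
  have xV: "x \<in> carrier G - center G" using xc x2c xx2 by (auto simp: center_def)
  have uV: "u \<in> carrier G - center G" using uc u2c uu2 by (auto simp: center_def)
  define m where "m = card P"
  define M where "M = card (rcosets\<^bsub>G\<^esub> P)"
  have gmM: "M * m = order G" unfolding m_def M_def by (rule G.lagrange[OF subP])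
  have ord0: "order G \<noteq> 0" using finG by (auto simp: order_def)
  have copmM: "coprime m M"
  proof (rule ccontr)
    assume nc: "\<not> coprime m M"
    have "\<not> coprime p M" using nc cP m_def by auto
    then have "p dvd M" using prime_imp_coprime[OF pp] by blast
    then have "p ^ Suc (multiplicity p (order G)) dvd order G"
      using gmM cP m_def by (metis mult.commute mult_dvd_mono power_Suc dvd_refl)
    then have "Suc (multiplicity p (order G)) \<le> multiplicity p (order G)"
    proof -
      have "p \<noteq> 1" using pp by auto
      then show ?thesis using power_dvd_iff_le_multiplicity[OF ord0, of p "Suc (multiplicity p (order G))"]
        \<open>p ^ Suc (multiplicity p (order G)) dvd order G\<close> by simp
    qed
    then show False by simp
  qed
  have copQm: "coprime (card Q) m"
    using cQ cP m_def primes_coprime[OF qp pp] pq by simp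
  have xm: "x [^]\<^bsub>G\<^esub> m = \<one>\<^bsub>G\<^esub>" unfolding m_def by (rule G.subgroup_pow_card[OF subP xP])
  have uQ1: "u [^]\<^bsub>G\<^esub> card Q = \<one>\<^bsub>G\<^esub>" by (rule G.subgroup_pow_card[OF subQ uQ])
  have m0: "m \<noteq> 0" using gmM ord0 by (metis mult_0_right)
  have decomp: "\<exists>a\<in>cen G x. \<exists>b\<in>cen G u. g0 = a \<otimes>\<^bsub>G\<^esub> b" if g0: "g0 \<in> carrier G" for g0
  proof -
    obtain s t where st: "m * s = M * t + gcd m M" using bezout_nat[OF m0] by blast
    then have st1: "m * s = M * t + 1" using copmM by simp
    have gN: "g0 [^]\<^bsub>G\<^esub> order G = \<one>\<^bsub>G\<^esub>" by (rule G.pow_order_eq_1[OF g0])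
    define a where "a = g0 [^]\<^bsub>G\<^esub> (m * s)"
    define b where "b = inv\<^bsub>G\<^esub> (g0 [^]\<^bsub>G\<^esub> (M * t))"
    have ac: "a \<in> carrier G" and bc: "b \<in> carrier G" using g0 by (auto simp: a_def b_def)
    have "a = g0 \<otimes>\<^bsub>G\<^esub> g0 [^]\<^bsub>G\<^esub> (M * t)"
      unfolding a_def st1 by (metis G.nat_pow_Suc2 Suc_eq_plus1 g0)
    then have ab: "g0 = a \<otimes>\<^bsub>G\<^esub> b" unfolding b_def using g0 by (simp add: G.m_assoc)
    have aM: "a [^]\<^bsub>G\<^esub> M = \<one>\<^bsub>G\<^esub>"
    proof -
      have e: "m * s * M = order G * s" using gmM[symmetric] by (simp add: ac_simps)
      have "a [^]\<^bsub>G\<^esub> M = (g0 [^]\<^bsub>G\<^esub> order G) [^]\<^bsub>G\<^esub> s"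
        unfolding a_def using g0 by (simp only: G.nat_pow_pow e)
      then show ?thesis using gN by simp
    qed
    have bm: "b [^]\<^bsub>G\<^esub> m = \<one>\<^bsub>G\<^esub>"
    proof -
      have e: "M * t * m = order G * t" using gmM[symmetric] by (simp add: ac_simps)
      have "(g0 [^]\<^bsub>G\<^esub> (M * t)) [^]\<^bsub>G\<^esub> m = (g0 [^]\<^bsub>G\<^esub> order G) [^]\<^bsub>G\<^esub> t"
        using g0 by (simp only: G.nat_pow_pow e)
      then have "(g0 [^]\<^bsub>G\<^esub> (M * t)) [^]\<^bsub>G\<^esub> m = \<one>\<^bsub>G\<^esub>" using gN by simp
      then show ?thesis unfolding b_def using g0 G.nat_pow_inv[of "g0 [^]\<^bsub>G\<^esub> (M * t)" m] by simp
    qed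
    have "x \<otimes>\<^bsub>G\<^esub> a = a \<otimes>\<^bsub>G\<^esub> x" by (rule G.nilpotent_coprime_commute[OF nil xc ac xm aM copmM])
    then have acen: "a \<in> cen G x" using ac by (simp add: cen_def)
    have "u \<otimes>\<^bsub>G\<^esub> b = b \<otimes>\<^bsub>G\<^esub> u" by (rule G.nilpotent_coprime_commute[OF nil uc bc uQ1 bm copQm])
    then have bcen: "b \<in> cen G u" using bc by (simp add: cen_def)
    show ?thesis using acen bcen ab by blast
  qed
  define A where "A = card (cen G x)"
  define B where "B = card (cen G u)"
  define C where "C = card (cen G x \<inter> cen G u)"
  define g where "g = card (carrier G)"
  have img: "(\<lambda>(a,b). a \<otimes>\<^bsub>G\<^esub> b) ` (cen G x \<times> cen G u) = carrier G"
  proof (intro equalityI subsetI)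
    fix w assume "w \<in> (\<lambda>(a,b). a \<otimes>\<^bsub>G\<^esub> b) ` (cen G x \<times> cen G u)"
    then show "w \<in> carrier G" by (auto simp: cen_def)
  next
    fix w assume "w \<in> carrier G"
    then obtain a b where "a \<in> cen G x" "b \<in> cen G u" "w = a \<otimes>\<^bsub>G\<^esub> b" using decomp by blast
    then show "w \<in> (\<lambda>(a,b). a \<otimes>\<^bsub>G\<^esub> b) ` (cen G x \<times> cen G u)" by force
  qed
  have ABC: "A * B = C * g"
    using G.prod_formula[OF G.cen_subgroup[OF xc] G.cen_subgroup[OF uc] finG] img
    by (simp add: A_def B_def C_def g_def)
  have Ag: "A < g"
  proof -
    have "x2 \<notin> cen G x" using xx2 by (auto simp: cen_def)
    then have "cen G x \<subset> carrier G" using x2c by (auto simp: cen_def)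
    then show ?thesis unfolding A_def g_def using finG psubset_card_mono by blast
  qed
  have Bg: "B < g"
  proof -
    have "u2 \<notin> cen G u" using uu2 by (auto simp: cen_def)
    then have "cen G u \<subset> carrier G" using u2c by (auto simp: cen_def)
    then show ?thesis unfolding B_def g_def using finG psubset_card_mono by blast
  qed
  obtain f where bij: "bij_betw f (carrier G - center G) (carrier H - center H)"
    and adj: "\<forall>x \<in> carrier G - center G. \<forall>y \<in> carrier G - center G.
        nc_adj G x y \<longleftrightarrow> nc_adj H (f x) (f y)"
    using assms(8) by (auto simp: nc_graph_iso_def)
  have finVG: "finite (carrier G - center G)" using finG by simp
  have finVH: "finite (carrier H - center H)" using bij_betw_finite[OF bij] finVG by simp
  obtain h1 h2 where h1: "h1 \<in> carrier H" and h2: "h2 \<in> carrier H" and hh: "h1 \<otimes>\<^bsub>H\<^esub> h2 \<noteq> h2 \<otimes>\<^bsub>H\<^esub> h1"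
    using assms(6) by (auto simp: non_abelian_set_def)
  have h1V: "h1 \<in> carrier H - center H" using h1 h2 hh by (auto simp: center_def)
  have finH: "finite (carrier H)" by (rule H.finite_if_noncentral_finite[OF finVH h1V])
  have fx: "f x \<in> carrier H" and fu: "f u \<in> carrier H"
    using bij xV uV by (auto simp: bij_betw_def)
  have cardV: "card (carrier H - center H) = card (carrier G - center G)"
    using bij by (simp add: bij_betw_same_card)
  have hH: "card (carrier H) = card (center H) + card (carrier G - center G)"
    using H.card_split[OF finH subset_refl H.center_subset] cardV by simp
  have gG: "g = card (center G) + card (carrier G - center G)"
    using G.card_split[OF finG subset_refl G.center_subset] g_def by simp
  have S1: "{x} \<subseteq> carrier G - center G" using xV by simp
  have S2: "{u} \<subseteq> carrier G - center G" using uV by simp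
  have S3: "{x, u} \<subseteq> carrier G - center G" using xV uV by simp
  have A': "card (cen H (f x)) = card (center H) + card (comm_set G {x})"
  proof -
    have "card (cen H (f x)) = card (center H) + card (cen H (f x) - center H)"
      by (rule H.card_split[OF finH _ H.center_sub_cen[OF fx]]) (auto simp: cen_def)
    also have "cen H (f x) - center H = comm_set H (f ` {x})" using H.cen_comm_set1[OF fx] by simp
    finally show ?thesis using comm_set_card[OF bij adj S1] by simp
  qed
  have B': "card (cen H (f u)) = card (center H) + card (comm_set G {u})"
  proof -
    have "card (cen H (f u)) = card (center H) + card (cen H (f u) - center H)"
      by (rule H.card_split[OF finH _ H.center_sub_cen[OF fu]]) (auto simp: cen_def)
    also have "cen H (f u) - center H = comm_set H (f ` {u})" using H.cen_comm_set1[OF fu] by simp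
    finally show ?thesis using comm_set_card[OF bij adj S2] by simp
  qed
  have C': "card (cen H (f x) \<inter> cen H (f u)) = card (center H) + card (comm_set G {x, u})"
  proof -
    have "card (cen H (f x) \<inter> cen H (f u)) = card (center H) + card (cen H (f x) \<inter> cen H (f u) - center H)"
      by (rule H.card_split[OF finH]) (use H.center_sub_cen[OF fx] H.center_sub_cen[OF fu] in \<open>auto simp: cen_def\<close>)
    also have "cen H (f x) \<inter> cen H (f u) - center H = comm_set H (f ` {x, u})"
      using H.cen_comm_set2[OF fx fu] by simp
    finally show ?thesis using comm_set_card[OF bij adj S3] by simp
  qed
  have A2: "A = card (center G) + card (comm_set G {x})"
    unfolding A_def using G.card_split[OF finG _ G.center_sub_cen[OF xc]] G.cen_comm_set1[OF xc]
    by (auto simp: cen_def)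
  have B2: "B = card (center G) + card (comm_set G {u})"
    unfolding B_def using G.card_split[OF finG _ G.center_sub_cen[OF uc]] G.cen_comm_set1[OF uc]
    by (auto simp: cen_def)
  have C2: "C = card (center G) + card (comm_set G {x, u})"
  proof -
    have "C = card (center G) + card (cen G x \<inter> cen G u - center G)"
      unfolding C_def
      by (rule G.card_split[OF finG]) (use G.center_sub_cen[OF xc] G.center_sub_cen[OF uc] in \<open>auto simp: cen_def\<close>)
    then show ?thesis using G.cen_comm_set2[OF xc uc] by simp
  qed
  have Hprod: "card (cen H (f x)) * card (cen H (f u)) \<le> card (cen H (f x) \<inter> cen H (f u)) * card (carrier H)"
  proof -
    have "(\<lambda>(a,b). a \<otimes>\<^bsub>H\<^esub> b) ` (cen H (f x) \<times> cen H (f u)) \<subseteq> carrier H" by (auto simp: cen_def)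
    then have "card ((\<lambda>(a,b). a \<otimes>\<^bsub>H\<^esub> b) ` (cen H (f x) \<times> cen H (f u))) \<le> card (carrier H)"
      using finH card_mono by blast
    then show ?thesis
      using H.prod_formula[OF H.cen_subgroup[OF fx] H.cen_subgroup[OF fu] finH] by simp
  qed
  define z1 where "z1 = card (center G)"
  define z2 where "z2 = card (center H)"
  have z12: "z2 \<le> z1" using assms(7) by (simp add: z1_def z2_def)
  define d :: int where "d = int z1 - int z2"
  have d0: "d \<ge> 0" using z12 by (simp add: d_def)
  have I1: "(int A - d) * (int B - d) \<le> (int C - d) * (int g - d)"
  proof -
    have "int (card (cen H (f x))) = int A - d" using A' A2 by (simp add: d_def z1_def z2_def)
    moreover have "int (card (cen H (f u))) = int B - d" using B' B2 by (simp add: d_def z1_def z2_def)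
    moreover have "int (card (cen H (f x) \<inter> cen H (f u))) = int C - d" using C' C2 by (simp add: d_def z1_def z2_def)
    moreover have "int (card (carrier H)) = int g - d" using hH gG by (simp add: d_def z1_def z2_def)
    moreover have "int (card (cen H (f x))) * int (card (cen H (f u))) \<le> int (card (cen H (f x) \<inter> cen H (f u))) * int (card (carrier H))"
      using Hprod by (metis of_nat_le_iff of_nat_mult)
    ultimately show ?thesis by simp
  qed
  have I2: "int A * int B = int C * int g" using ABC by (metis of_nat_mult)
  have gpos: "int g > 0" using Ag by simp
  have I3: "d * (int C + int g - int A - int B) \<le> 0"
    using I1 I2 by (simp add: algebra_simps)
  have I4: "int g * (int C + int g - int A - int B) = (int g - int A) * (int g - int B)"
    using I2 by (simp add: algebra_simps)
  have "(int g - int A) * (int g - int B) > 0" using Ag Bg by simp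
  then have I5: "int C + int g - int A - int B > 0" using I4 gpos by (metis zero_less_mult_pos)
  have "d \<le> 0"
  proof (rule ccontr)
    assume "\<not> d \<le> 0"
    then have "d * (int C + int g - int A - int B) > 0" using I5 by simp
    then show False using I3 by simp
  qed
  then have "z1 = z2" using d0 by (simp add: d_def)
  then show ?thesis using hH gG g_def z1_def z2_def by simp
qed


end
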